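(* The two-dimensional subalgebras of ${\rm A}_5$ are exactly $\langle e_1,e_2\rangle$, $\langle e_1\pm e_3,e_2\rangle$ and $\langle e_1,\alpha e_2+e_3\rangle$ ($\alpha\in\mathbb{C}$). Up to automorphisms of ${\rm A}_5$, every two-dimensional subalgebra is equivalent to one of $\langle e_1,e_2\rangle$, $\langle e_1+e_3,e_2\rangle$, $\langle e_1-e_3,e_2\rangle$, $\langle e_1,e_3\rangle$.
   Context: ${\rm A}_5$ is the complex algebra with basis $e_1,e_2,e_3$, unit $e_1$ ($e_1e_i=e_ie_1=e_i$), $e_2e_3=e_2$, $e_3e_2=-e_2$, $e_3e_3=e_1$; all other products of basis elements are zero. A subalgebra is a linear subspace closed under multiplication (it need not contain $e_1$). Equivalence up to automorphisms means one is mapped onto the other by an algebra automorphism. $\langle S\rangle$ denotes linear span. *)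

theory Defs
  imports "HOL-Analysis.Analysis"
begin

text \<open>Elements of A5: triples (a,b,c) standing for a e1 + b e2 + c e3 over the complex numbers.\<close>
type_synonym a5 = "complex \<times> complex \<times> complex"

definition a5_scale :: "complex \<Rightarrow> a5 \<Rightarrow> a5" where
  "a5_scale k x = (k * fst x, k * fst (snd x), k * snd (snd x))"

definition e1 :: a5 where "e1 = (1, 0, 0)"
definition e2 :: a5 where "e2 = (0, 1, 0)"
definition e3 :: a5 where "e3 = (0, 0, 1)"

text \<open>Bilinear product: e1 unit, e2 e3 = e2, e3 e2 = -e2, e3 e3 = e1, all other products zero.\<close>
definition a5_mult :: "a5 \<Rightarrow> a5 \<Rightarrow> a5" where
  "a5_mult x y = (case x of (a, b, c) \<Rightarrow> case y of (a', b', c') \<Rightarrow>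
      (a * a' + c * c', a * b' + b * a' + b * c' - c * b', a * c' + c * a'))"

definition a5_span :: "a5 set \<Rightarrow> a5 set" where
  "a5_span S = module.span a5_scale S"

definition a5_subalgebra :: "a5 set \<Rightarrow> bool" where
  "a5_subalgebra S \<longleftrightarrow> module.subspace a5_scale S \<and>
     (\<forall>x\<in>S. \<forall>y\<in>S. a5_mult x y \<in> S)"

definition a5_dim :: "a5 set \<Rightarrow> nat" where
  "a5_dim S = vector_space.dim a5_scale S"

definition a5_automorphism :: "(a5 \<Rightarrow> a5) \<Rightarrow> bool" where
  "a5_automorphism \<phi> \<longleftrightarrow> Vector_Spaces.linear a5_scale a5_scale \<phi> \<and> bij \<phi> \<and>
     (\<forall>x y. \<phi> (a5_mult x y) = a5_mult (\<phi> x) (\<phi> y))"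

end

theory Submission imports Defs begin

lemma vs: "vector_space a5_scale"
  by unfold_locales (auto simp: a5_scale_def algebra_simps)

interpretation A: vector_space a5_scale by (rule vs)

definition dotp :: "a5 \<Rightarrow> a5 \<Rightarrow> complex" where
  "dotp p x = fst p * fst x + fst (snd p) * fst (snd x) + snd (snd p) * snd (snd x)"

definition crs :: "a5 \<Rightarrow> a5 \<Rightarrow> a5" where
  "crs u v = (fst (snd u) * snd (snd v) - snd (snd u) * fst (snd v),
              snd (snd u) * fst v - fst u * snd (snd v),
              fst u * fst (snd v) - fst (snd u) * fst v)"

lemma span2: "A.span {u, v} = {x. \<exists>s t. x = a5_scale s u + a5_scale t v}"
  by (auto simp: A.span_insert A.span_singleton algebra_simps)

lemma solve2:
  fixes a b c a' b' c' x1 x2 x3 :: complex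
  assumes D: "a * b' - b * a' \<noteq> 0"
    and d: "(b * c' - c * b') * x1 + (c * a' - a * c') * x2 + (a * b' - b * a') * x3 = 0"
  shows "\<exists>s t. x1 = s * a + t * a' \<and> x2 = s * b + t * b' \<and> x3 = s * c + t * c'"
proof -
  define E where "E = a * b' - b * a'"
  define s where "s = (x1 * b' - a' * x2) / E"
  define t where "t = (a * x2 - b * x1) / E"
  have E: "E \<noteq> 0" using D by (simp add: E_def)
  have sE: "s * E = x1 * b' - a' * x2" using E by (simp add: s_def)
  have tE: "t * E = a * x2 - b * x1" using E by (simp add: t_def)
  have "E * (s * a + t * a') = (s * E) * a + (t * E) * a'" by (simp add: algebra_simps)
  also have "\<dots> = (x1 * b' - a' * x2) * a + (a * x2 - b * x1) * a'" by (simp only: sE tE)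
  also have "\<dots> = E * x1" by (simp add: E_def algebra_simps)
  finally have 1: "x1 = s * a + t * a'" using E by simp
  have "E * (s * b + t * b') = (s * E) * b + (t * E) * b'" by (simp add: algebra_simps)
  also have "\<dots> = (x1 * b' - a' * x2) * b + (a * x2 - b * x1) * b'" by (simp only: sE tE)
  also have "\<dots> = E * x2" by (simp add: E_def algebra_simps)
  finally have 2: "x2 = s * b + t * b'" using E by simp
  have "E * (s * c + t * c') = (s * E) * c + (t * E) * c'" by (simp add: algebra_simps)
  also have "\<dots> = (x1 * b' - a' * x2) * c + (a * x2 - b * x1) * c'" by (simp only: sE tE)
  also have "\<dots> = E * x3" using d by (simp add: E_def algebra_simps)
  finally have 3: "x3 = s * c + t * c'" using E by simp
  show ?thesis using 1 2 3 by blast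
qed

lemma lincomb:
  assumes "crs u v \<noteq> 0"
  shows "(\<exists>s t. x = a5_scale s u + a5_scale t v) \<longleftrightarrow> dotp (crs u v) x = 0"
proof -
  obtain a b c where u: "u = (a,b,c)" by (cases u) auto
  obtain a' b' c' where v: "v = (a',b',c')" by (cases v) auto
  obtain x1 x2 x3 where x: "x = (x1,x2,x3)" by (cases x) auto
  show ?thesis
  proof
    assume "\<exists>s t. x = a5_scale s u + a5_scale t v"
    then show "dotp (crs u v) x = 0" by (auto simp: u v x a5_scale_def dotp_def crs_def algebra_simps)
  next
    assume d: "dotp (crs u v) x = 0"
    hence d': "(b * c' - c * b') * x1 + (c * a' - a * c') * x2 + (a * b' - b * a') * x3 = 0"
      by (simp add: u v x dotp_def crs_def)
    from assms have "a * b' - b * a' \<noteq> 0 \<or> b * c' - c * b' \<noteq> 0 \<or> c * a' - a * c' \<noteq> 0"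
      by (auto simp: u v crs_def zero_prod_def)
    then show "\<exists>s t. x = a5_scale s u + a5_scale t v"
    proof (elim disjE)
      assume D: "a * b' - b * a' \<noteq> 0"
      from solve2[OF D d'] show ?thesis by (auto simp: u v x a5_scale_def)
    next
      assume D: "b * c' - c * b' \<noteq> 0"
      have "(c * a' - a * c') * x2 + (a * b' - b * a') * x3 + (b * c' - c * b') * x1 = 0"
        using d' by (simp add: algebra_simps)
      from solve2[OF D this] show ?thesis by (auto simp: u v x a5_scale_def)
    next
      assume D: "c * a' - a * c' \<noteq> 0"
      have "(a * b' - b * a') * x3 + (b * c' - c * b') * x1 + (c * a' - a * c') * x2 = 0"
        using d' by (simp add: algebra_simps)
      from solve2[OF D this] show ?thesis by (auto simp: u v x a5_scale_def)
    qed
  qed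
qed


lemma t1: fixes a b c a' b' c' :: complex
  assumes "crs (a,b,c) (a',b',c') \<noteq> 0"
  shows "(a',b',c') \<noteq> 0 \<and> (\<forall>k. (a,b,c) \<noteq> a5_scale k (a',b',c'))"
  using assms by (auto simp: crs_def a5_scale_def zero_prod_def)

lemma t2: fixes a b c a' b' c' :: complex
  assumes e: "crs (a,b,c) (a',b',c') = 0" and n: "(a',b',c') \<noteq> 0"
  shows "\<exists>k. (a,b,c) = a5_scale k (a',b',c')"
proof -
  have e: "b * c' = c * b'" "c * a' = a * c'" "a * b' = b * a'"
    using e by (simp_all add: crs_def zero_prod_def)
  have "a' \<noteq> 0 \<or> b' \<noteq> 0 \<or> c' \<noteq> 0" using n by (auto simp: zero_prod_def)
  then show ?thesis
  proof (elim disjE)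
    assume n: "a' \<noteq> 0"
    have "(a,b,c) = a5_scale (a / a') (a',b',c')" using n e
      by (simp add: a5_scale_def field_simps; simp add: mult.commute)
    thus ?thesis by blast
  next
    assume n: "b' \<noteq> 0"
    have "(a,b,c) = a5_scale (b / b') (a',b',c')" using n e
      by (simp add: a5_scale_def field_simps; simp add: mult.commute)
    thus ?thesis by blast
  next
    assume n: "c' \<noteq> 0"
    have "(a,b,c) = a5_scale (c / c') (a',b',c')" using n e
      by (simp add: a5_scale_def field_simps; simp add: mult.commute)
    thus ?thesis by blast
  qed
qed

lemma indep2:
  assumes "u \<noteq> v" shows "A.independent {u, v} \<longleftrightarrow> crs u v \<noteq> 0"
proof -
  have 1: "A.independent {u, v} \<longleftrightarrow> v \<noteq> 0 \<and> (\<forall>k. u \<noteq> a5_scale k v)"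
    using assms by (auto simp: A.independent_insert A.span_singleton)
  obtain a b c where u: "u = (a,b,c)" by (cases u) auto
  obtain a' b' c' where v: "v = (a',b',c')" by (cases v) auto
  have "crs (a,b,c) (a',b',c') \<noteq> 0 \<longleftrightarrow> (a',b',c') \<noteq> 0 \<and> (\<forall>k. (a,b,c) \<noteq> a5_scale k (a',b',c'))"
    using t1[of a b c a' b' c'] t2[of a b c a' b' c'] by metis
  then show ?thesis unfolding 1 unfolding u v by simp
qed

definition K :: "a5 \<Rightarrow> a5 set" where "K p = {x. dotp p x = 0}"

lemma span_K: "crs u v \<noteq> 0 \<Longrightarrow> A.span {u, v} = K (crs u v)"
  using lincomb[of u v] by (auto simp: span2 K_def)

lemma dim_span2: assumes "crs u v \<noteq> 0" shows "a5_dim (A.span {u, v}) = 2"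
proof -
  have "u \<noteq> v" using assms by (auto simp: crs_def zero_prod_def)
  hence i: "A.independent {u,v}" using indep2 assms by blast
  have "A.dim {u,v} = 2" using A.dim_eq_card_independent[OF i] \<open>u \<noteq> v\<close> by simp
  thus ?thesis by (simp add: a5_dim_def)
qed

lemma dotp_scale: "dotp (a5_scale k p) x = k * dotp p x"
  by (simp add: dotp_def a5_scale_def algebra_simps)

lemma K_scale: "k \<noteq> 0 \<Longrightarrow> K (a5_scale k p) = K p"
  by (auto simp: K_def dotp_scale)

lemma sub_K:
  assumes "a5_subalgebra S" "a5_dim S = 2"
  shows "\<exists>p. p \<noteq> 0 \<and> S = K p"
proof -
  obtain B where B: "B \<subseteq> S" "A.independent B" "S \<subseteq> A.span B" "card B = A.dim S"
    by (rule A.basis_exists)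
  have "card B = 2" using B(4) assms(2) by (simp add: a5_dim_def)
  then obtain u v where uv: "B = {u, v}" "u \<noteq> v"
    by (meson card_2_iff)
  have sub: "A.subspace S" using assms(1) by (simp add: a5_subalgebra_def)
  have "A.span B = S" using A.span_subspace[OF B(1) B(3) sub] .
  moreover have c: "crs u v \<noteq> 0" using B(2) uv indep2 by blast
  ultimately show ?thesis using span_K[OF c] uv(1) by metis
qed


lemma closed_K:
  assumes p0: "p \<noteq> 0" and cl: "\<forall>x\<in>K p. \<forall>y\<in>K p. a5_mult x y \<in> K p"
  shows "K p = K (0,0,1) \<or> K p = K (-1,0,1) \<or> K p = K (1,0,1) \<or> (\<exists>\<alpha>. K p = K (0,-1,\<alpha>))"
proof -
  obtain p1 p2 p3 where p: "p = (p1,p2,p3)" by (cases p) auto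
  show ?thesis
  proof (cases "p2 = 0")
    case False
    have "(p2, -p1, 0) \<in> K p" by (simp add: K_def dotp_def p algebra_simps)
    hence "a5_mult (p2, -p1, 0) (p2, -p1, 0) \<in> K p" using cl by blast
    hence "p1 * (p2 * p2) = 0" by (simp add: K_def dotp_def p a5_mult_def algebra_simps)
    hence p1: "p1 = 0" using False by simp
    have "(0, -1, - p3 / p2) = a5_scale (-1 / p2) p" using False p1 by (simp add: p a5_scale_def)
    hence "K (0, -1, - p3 / p2) = K p" using False K_scale[of "-1/p2" p] by simp
    thus ?thesis by metis
  next
    case True
    have "(p3, 0, -p1) \<in> K p" using True by (simp add: K_def dotp_def p algebra_simps)
    hence "a5_mult (p3, 0, -p1) (p3, 0, -p1) \<in> K p" using cl by blast
    hence "p1 * ((p1 - p3) * (p1 + p3)) = 0" using True by (simp add: K_def dotp_def p a5_mult_def algebra_simps)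
    hence "p1 = 0 \<or> p1 = p3 \<or> p1 = - p3" by (auto simp: add_eq_0_iff)
    thus ?thesis
    proof (elim disjE)
      assume p1: "p1 = 0"
      hence p3: "p3 \<noteq> 0" using p0 True by (simp add: p zero_prod_def)
      have "(0, 0, 1) = a5_scale (1 / p3) p" using True p1 p3 by (simp add: p a5_scale_def)
      hence "K (0, 0, 1) = K p" using p3 K_scale[of "1/p3" p] by simp
      thus ?thesis by metis
    next
      assume p1: "p1 = p3"
      hence p3: "p3 \<noteq> 0" using p0 True by (auto simp: p zero_prod_def)
      have "(1, 0, 1) = a5_scale (1 / p3) p" using True p1 p3 by (simp add: p a5_scale_def)
      hence "K (1, 0, 1) = K p" using p3 K_scale[of "1/p3" p] by simp
      thus ?thesis by metis
    next
      assume p1: "p1 = - p3"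
      hence p3: "p3 \<noteq> 0" using p0 True by (auto simp: p zero_prod_def)
      have "(-1, 0, 1) = a5_scale (1 / p3) p" using True p1 p3 by (simp add: p a5_scale_def)
      hence "K (-1, 0, 1) = K p" using p3 K_scale[of "1/p3" p] by simp
      thus ?thesis by metis
    qed
  qed
qed

lemma tgt:
  assumes "crs u v = q" "q \<noteq> 0"
  shows "a5_span {u, v} = K q" "a5_dim (a5_span {u, v}) = 2"
  using span_K[of u v] dim_span2[of u v] assms by (simp_all add: a5_span_def)

lemma crs_vals:
  "crs e1 e2 = (0,0,1)" "crs (e1 + e3) e2 = (-1,0,1)" "crs (e1 - e3) e2 = (1,0,1)"
  "crs e1 (a5_scale \<alpha> e2 + e3) = (0,-1,\<alpha>)" "crs e1 e3 = (0,-1,0)"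
  by (simp_all add: crs_def e1_def e2_def e3_def a5_scale_def)

lemma nz: "((0,0,1)::a5) \<noteq> 0" "((-1,0,1)::a5) \<noteq> 0" "((1,0,1)::a5) \<noteq> 0" "((0,-1,\<alpha>)::a5) \<noteq> 0"
  by (simp_all add: zero_prod_def)

lemmas spans = tgt[OF crs_vals(1) nz(1)] tgt[OF crs_vals(2) nz(2)] tgt[OF crs_vals(3) nz(3)]
  tgt[OF crs_vals(4) nz(4)] tgt[OF crs_vals(5) nz(4)]

lemma KC:
  "\<forall>x\<in>K (0,0,1). \<forall>y\<in>K (0,0,1). a5_mult x y \<in> K (0,0,1)"
  "\<forall>x\<in>K (-1,0,1). \<forall>y\<in>K (-1,0,1). a5_mult x y \<in> K (-1,0,1)"
  "\<forall>x\<in>K (0,-1,\<alpha>). \<forall>y\<in>K (0,-1,\<alpha>). a5_mult x y \<in> K (0,-1,\<alpha>)"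
  by (auto simp: K_def dotp_def a5_mult_def algebra_simps)

lemma KC3: "\<forall>x\<in>K (1,0,1). \<forall>y\<in>K (1,0,1). a5_mult x y \<in> K (1,0,1)"
  by (auto simp: K_def dotp_def a5_mult_def add_eq_0_iff)

lemma subalg_span: "a5_span {u,v} = K q \<Longrightarrow> \<forall>x\<in>K q. \<forall>y\<in>K q. a5_mult x y \<in> K q
   \<Longrightarrow> a5_subalgebra (a5_span {u,v})"
  unfolding a5_subalgebra_def by (metis A.subspace_span a5_span_def)


lemma aut_id: "a5_automorphism id"
  unfolding a5_automorphism_def using vs by (simp add: Vector_Spaces.linear_iff)

definition phi :: "complex \<Rightarrow> a5 \<Rightarrow> a5" where
  "phi \<alpha> x = (fst x, fst (snd x) - \<alpha> * snd (snd x), snd (snd x))"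

lemma aut_phi: "a5_automorphism (phi \<alpha>)"
proof -
  have lin: "Vector_Spaces.linear a5_scale a5_scale (phi \<alpha>)"
    using vs by (simp add: Vector_Spaces.linear_iff phi_def a5_scale_def algebra_simps)
  have "phi (-\<alpha>) \<circ> phi \<alpha> = id" "phi \<alpha> \<circ> phi (-\<alpha>) = id"
    by (auto simp: phi_def fun_eq_iff)
  hence b: "bij (phi \<alpha>)" by (rule o_bij)
  have m: "\<forall>x y. phi \<alpha> (a5_mult x y) = a5_mult (phi \<alpha> x) (phi \<alpha> y)"
    by (auto simp: phi_def a5_mult_def split: prod.splits) (simp_all add: algebra_simps)
  show ?thesis using lin b m by (simp add: a5_automorphism_def)
qed

lemma phi_img: "phi \<alpha> ` K (0,-1,\<alpha>) = K (0,-1,0)"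
proof
  show "phi \<alpha> ` K (0,-1,\<alpha>) \<subseteq> K (0,-1,0)"
    by (auto simp: phi_def K_def dotp_def)
  show "K (0,-1,0) \<subseteq> phi \<alpha> ` K (0,-1,\<alpha>)"
  proof
    fix x assume "x \<in> K (0,-1,0)"
    hence x: "fst (snd x) = 0" by (simp add: K_def dotp_def)
    have "x = phi \<alpha> (fst x, \<alpha> * snd (snd x), snd (snd x))" using x by (simp add: phi_def prod_eq_iff)
    moreover have "(fst x, \<alpha> * snd (snd x), snd (snd x)) \<in> K (0,-1,\<alpha>)" by (simp add: K_def dotp_def)
    ultimately show "x \<in> phi \<alpha> ` K (0,-1,\<alpha>)" by blast
  qed
qed

theorem mainTheorem13:
  shows "(\<forall>S. (a5_subalgebra S \<and> a5_dim S = 2) \<longleftrightarrow>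
            (S = a5_span {e1, e2} \<or> S = a5_span {e1 + e3, e2} \<or> S = a5_span {e1 - e3, e2} \<or>
             (\<exists>\<alpha>::complex. S = a5_span {e1, a5_scale \<alpha> e2 + e3})))
       \<and> (\<forall>S. a5_subalgebra S \<and> a5_dim S = 2 \<longrightarrow>
            (\<exists>\<phi>. a5_automorphism \<phi> \<and>
               (\<phi> ` S = a5_span {e1, e2} \<or> \<phi> ` S = a5_span {e1 + e3, e2} \<or>
                \<phi> ` S = a5_span {e1 - e3, e2} \<or> \<phi> ` S = a5_span {e1, e3})))"
proof -
  have P1: "(a5_subalgebra S \<and> a5_dim S = 2) \<longleftrightarrow>
            (S = a5_span {e1, e2} \<or> S = a5_span {e1 + e3, e2} \<or> S = a5_span {e1 - e3, e2} \<or>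
             (\<exists>\<alpha>::complex. S = a5_span {e1, a5_scale \<alpha> e2 + e3}))" for S
  proof
    assume h: "a5_subalgebra S \<and> a5_dim S = 2"
    then obtain p where p: "p \<noteq> 0" "S = K p" using sub_K by blast
    have "\<forall>x\<in>K p. \<forall>y\<in>K p. a5_mult x y \<in> K p" using h p(2) by (simp add: a5_subalgebra_def)
    from closed_K[OF p(1) this] show "S = a5_span {e1, e2} \<or> S = a5_span {e1 + e3, e2} \<or> S = a5_span {e1 - e3, e2} \<or>
             (\<exists>\<alpha>::complex. S = a5_span {e1, a5_scale \<alpha> e2 + e3})"
      unfolding p(2) spans(1,3,5,7) by blast
  next
    assume "S = a5_span {e1, e2} \<or> S = a5_span {e1 + e3, e2} \<or> S = a5_span {e1 - e3, e2} \<or>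
             (\<exists>\<alpha>::complex. S = a5_span {e1, a5_scale \<alpha> e2 + e3})"
    then show "a5_subalgebra S \<and> a5_dim S = 2"
    proof (elim disjE exE)
      assume "S = a5_span {e1, e2}"
      thus ?thesis using subalg_span[OF spans(1) KC(1)] spans(2) by simp
    next
      assume "S = a5_span {e1 + e3, e2}"
      thus ?thesis using subalg_span[OF spans(3) KC(2)] spans(4) by simp
    next
      assume "S = a5_span {e1 - e3, e2}"
      thus ?thesis using subalg_span[OF spans(5) KC3] spans(6) by simp
    next
      fix \<alpha> assume "S = a5_span {e1, a5_scale \<alpha> e2 + e3}"
      thus ?thesis using subalg_span[OF spans(7) KC(3)] spans(8) by simp
    qed
  qed
  moreover have "\<exists>\<phi>. a5_automorphism \<phi> \<and>
               (\<phi> ` S = a5_span {e1, e2} \<or> \<phi> ` S = a5_span {e1 + e3, e2} \<or>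
                \<phi> ` S = a5_span {e1 - e3, e2} \<or> \<phi> ` S = a5_span {e1, e3})"
    if h: "a5_subalgebra S \<and> a5_dim S = 2" for S
  proof -
    from h P1 have "S = a5_span {e1, e2} \<or> S = a5_span {e1 + e3, e2} \<or> S = a5_span {e1 - e3, e2} \<or>
             (\<exists>\<alpha>::complex. S = a5_span {e1, a5_scale \<alpha> e2 + e3})" by blast
    then show ?thesis
    proof (elim disjE exE)
      fix \<alpha> assume "S = a5_span {e1, a5_scale \<alpha> e2 + e3}"
      hence "phi \<alpha> ` S = a5_span {e1, e3}" using phi_img spans(7,9) by simp
      thus ?thesis using aut_phi by blast
    qed (use aut_id in auto)
  qed
  ultimately show ?thesis by blast
qed

end
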